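(* Suppose $k\ge2$ and $n\ge k+2$. Then for every $1\le\ell\le k+1$, $$\mathrm{Ker}(\Theta_1)\subset\mathrm{Ker}(\Theta_\ell)$$ as subgroups of $H^*\otimes_\mathbb{Z}\mathcal{L}_n(k+1)$ (with $\Theta_\ell$ restricted to $H^*\otimes_\mathbb{Z}\mathcal{L}_n(k+1)$).
   Context: $F_n$ is the free group of rank $n$, $H=F_n/[F_n,F_n]\cong\mathbb{Z}^n$, $H^*=\mathrm{Hom}(H,\mathbb{Z})$. $\mathcal{L}_n(m)\subset H^{\otimes m}$ is the degree-$m$ part of the free Lie algebra on $H$, i.e. the $\mathbb{Z}$-span of left-normed brackets $[a_1,\dots,a_m]$ computed with $[x,y]=x\otimes y-y\otimes x$ (equivalently the $m$th graded quotient of the lower central series of $F_n$). For $m\ge0$, $\mathcal{C}_n(m)$ is the quotient of $H^{\otimes m}$ by the subgroup generated by all $a_1\otimes a_2\otimes\cdots\otimes a_m-a_2\otimes\cdots\otimes a_m\otimes a_1$ ($\mathcal{C}_n(0)=\mathbb{Z}$), with projection $\pi_m$. For $1\le\ell\le k+1$: $\Phi_{1,\ell+1}:H^*\otimes H^{\otimes k+1}\to H^{\otimes k}$, $f\otimes a_1\otimes\cdots\otimes a_{k+1}\mapsto f(a_\ell)\,a_1\otimes\cdots\otimes\widehat{a_\ell}\otimes\cdots\otimes a_{k+1}$; $\varpi_\ell:H^{\otimes k}\to\mathcal{C}_n(\ell-1)\otimes\mathcal{C}_n(k-\ell+1)$, $a_1\otimes\cdots\otimes a_k\mapsto\pi_{\ell-1}(a_1\otimes\cdots\otimes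 a_{\ell-1})\otimes\pi_{k-\ell+1}(a_\ell\otimes\cdots\otimes a_k)$; and $\Theta_\ell=\varpi_\ell\circ\Phi_{1,\ell+1}$. (So $\Theta_1=\pi_k\circ\Phi_{1,2}$ up to the identification $\mathbb{Z}\otimes\mathcal{C}_n(k)=\mathcal{C}_n(k)$.) *)

theory Defs
  imports Main "HOL-Library.Function_Algebras"
begin

text \<open>H = Z^n with basis e_0,...,e_(n-1). An element of the free abelian group
  H^(tensor m) is a finitely supported function from words (nat list) to int; the word
  [a1,...,am] stands for the basis tensor e_a1 (x) ... (x) e_am. An element of
  H^* (tensor) H^(tensor m) is a function (nat \<times> nat list) \<Rightarrow> int, the pair (i,w) standing
  for the basis tensor e_i^* (x) w, where e_i^* is the dual basis.\<close>

definition words :: "nat \<Rightarrow> nat \<Rightarrow> nat list set" where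
  "words n m = {w. length w = m \<and> set w \<subseteq> {..<n}}"

definition basis :: "nat list \<Rightarrow> (nat list \<Rightarrow> int)" where
  "basis w = (\<lambda>u. if u = w then 1 else 0)"

definition tmult :: "(nat list \<Rightarrow> int) \<Rightarrow> (nat list \<Rightarrow> int) \<Rightarrow> (nat list \<Rightarrow> int)" where
  "tmult x y = (\<lambda>w. \<Sum>i\<le>length w. x (take i w) * y (drop i w))"

definition bracket :: "(nat list \<Rightarrow> int) \<Rightarrow> (nat list \<Rightarrow> int) \<Rightarrow> (nat list \<Rightarrow> int)" where
  "bracket x y = tmult x y - tmult y x"

text \<open>Left-normed bracket [a1, a2, ..., am] = [...[[a1,a2],a3],...,am] of basis vectors.\<close>
fun lbracket :: "nat list \<Rightarrow> (nat list \<Rightarrow> int)" where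
  "lbracket [] = 0"
| "lbracket (a # as) = foldl (\<lambda>acc b. bracket acc (basis [b])) (basis [a]) as"

inductive_set zspan :: "('a \<Rightarrow> int) set \<Rightarrow> ('a \<Rightarrow> int) set" for S where
  zero: "0 \<in> zspan S"
| add: "y \<in> zspan S \<Longrightarrow> x \<in> S \<Longrightarrow> y + x \<in> zspan S"
| diff: "y \<in> zspan S \<Longrightarrow> x \<in> S \<Longrightarrow> y - x \<in> zspan S"

definition dtens :: "nat \<Rightarrow> (nat list \<Rightarrow> int) \<Rightarrow> (nat \<times> nat list \<Rightarrow> int)" where
  "dtens i x = (\<lambda>(j, w). if j = i then x w else 0)"

text \<open>H^* (x) L_n(k+1), as a subgroup of H^* (x) H^(tensor (k+1)): spanned by
  e_i^* (x) [a1,...,a_(k+1)] with a_j basis vectors (multilinearity).\<close>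
definition dualLie :: "nat \<Rightarrow> nat \<Rightarrow> (nat \<times> nat list \<Rightarrow> int) set" where
  "dualLie n k = zspan {dtens i (lbracket a) | i a. i < n \<and> a \<in> words n (k + 1)}"

text \<open>Phi_(1,l+1) : H^* (x) H^(tensor (k+1)) \<rightarrow> H^(tensor k), extended linearly from
  e_i^* (x) a1...a_(k+1) \<mapsto> e_i^*(a_l) a1...(a_l omitted)...a_(k+1).\<close>
definition Phi :: "nat \<Rightarrow> nat \<Rightarrow> nat \<Rightarrow> (nat \<times> nat list \<Rightarrow> int) \<Rightarrow> (nat list \<Rightarrow> int)" where
  "Phi n k l x = (\<lambda>u. \<Sum>i<n. \<Sum>w\<in>words n (k + 1).
       if w ! (l - 1) = i \<and> take (l - 1) w @ drop l w = u then x (i, w) else 0)"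

text \<open>C_n(l-1) (x) C_n(k-l+1) = H^(tensor k) / (R_(l-1) (x) H^(tensor (k-l+1)) + H^(tensor (l-1)) (x) R_(k-l+1)),
  where R_m is the subgroup generated by the cyclic relations. This is the subgroup
  that is the kernel of varpi_l.\<close>
definition cycRel :: "nat \<Rightarrow> nat \<Rightarrow> nat \<Rightarrow> (nat list \<Rightarrow> int) set" where
  "cycRel n k l = zspan
     ({basis (u @ v) - basis (rotate1 u @ v) | u v. u \<in> words n (l - 1) \<and> v \<in> words n (k + 1 - l)}
    \<union> {basis (u @ v) - basis (u @ rotate1 v) | u v. u \<in> words n (l - 1) \<and> v \<in> words n (k + 1 - l)})"

text \<open>Kernel of Theta_l = varpi_l o Phi_(1,l+1), restricted to H^* (x) L_n(k+1).\<close>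
definition kerTheta :: "nat \<Rightarrow> nat \<Rightarrow> nat \<Rightarrow> (nat \<times> nat list \<Rightarrow> int) set" where
  "kerTheta n k l = {x \<in> dualLie n k. Phi n k l x \<in> cycRel n k l}"

end

theory Submission
  imports Defs "HOL-Library.Multiset"
begin

fun shf :: "'a list \<Rightarrow> 'a list \<Rightarrow> 'a list list" where
  "shf [] ys = [ys]"
| "shf xs [] = [xs]"
| "shf (x#xs) (y#ys) = map ((#) x) (shf xs (y#ys)) @ map ((#) y) (shf (x#xs) ys)"

lemma shf_Nil2[simp]: "shf xs [] = [xs]"
  by (cases xs) auto

lemma shf_snoc1: "mset (shf [a] (ys@[b])) = mset (map (\<lambda>w. w@[a]) (shf [] (ys@[b])) @ map (\<lambda>w. w@[b]) (shf [a] ys))"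
  by (induction ys) (auto simp: mset_map multiset.map_comp o_def)

lemma shf_snoc2: "mset (shf (xs@[a]) [b]) = mset (map (\<lambda>w. w@[a]) (shf xs [b]) @ map (\<lambda>w. w@[b]) (shf (xs@[a]) []))"
  by (induction xs) (auto simp: mset_map multiset.map_comp o_def)

lemma shf_snoc: "mset (shf (xs@[a]) (ys@[b])) = mset (map (\<lambda>w. w@[a]) (shf xs (ys@[b])) @ map (\<lambda>w. w@[b]) (shf (xs@[a]) ys))"
proof (induction xs ys rule: shf.induct)
  case (1 ys)
  then show ?case using shf_snoc1 by simp
next
  case (2 v va)
  then show ?case using shf_snoc2[of "v#va"] by simp
next
  case (3 x xs y ys)
  then show ?case by (simp add: mset_map multiset.map_comp o_def add_ac)
qed

lemma sum_shf_snoc: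
  fixes f :: "nat list \<Rightarrow> int"
  shows "(\<Sum>w\<leftarrow>shf (xs@[a]) (ys@[b]). f w) = (\<Sum>w\<leftarrow>shf xs (ys@[b]). f (w@[a])) + (\<Sum>w\<leftarrow>shf (xs@[a]) ys. f (w@[b]))"
proof -
  have "(\<Sum>w\<leftarrow>shf (xs@[a]) (ys@[b]). f w) = sum_mset (image_mset f (mset (shf (xs@[a]) (ys@[b]))))"
    by (metis sum_mset_sum_list mset_map)
  also have "\<dots> = sum_mset (image_mset f (mset (map (\<lambda>w. w@[a]) (shf xs (ys@[b])) @ map (\<lambda>w. w@[b]) (shf (xs@[a]) ys))))"
    by (simp only: shf_snoc)
  also have "\<dots> = (\<Sum>w\<leftarrow>shf xs (ys@[b]). f (w@[a])) + (\<Sum>w\<leftarrow>shf (xs@[a]) ys. f (w@[b]))"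
    by (simp add: sum_mset_sum_list mset_map multiset.map_comp o_def flip: mset_map)
  finally show ?thesis .
qed

lemma shf_set: "w \<in> set (shf xs ys) \<Longrightarrow> length w = length xs + length ys \<and> set w \<subseteq> set xs \<union> set ys"
  by (induction xs ys arbitrary: w rule: shf.induct) (simp, simp, force)

lemma shf_nonempty: "w \<in> set (shf xs ys) \<Longrightarrow> xs \<noteq> [] \<Longrightarrow> w \<noteq> []"
  using shf_set by fastforce

definition prim :: "(nat list \<Rightarrow> int) \<Rightarrow> bool" where
  "prim X \<longleftrightarrow> (\<forall>p q. p \<noteq> [] \<longrightarrow> q \<noteq> [] \<longrightarrow> (\<Sum>w\<leftarrow>shf p q. X w) = 0)"

lemma tmult_basis_right: "tmult X (basis [b]) z = (if z \<noteq> [] \<and> last z = b then X (butlast z) else 0)"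
proof -
  have H: "\<forall>i\<in>{..length z}. X (take i z) * basis [b] (drop i z) =
     (if i = length z - 1 then (if z \<noteq> [] \<and> last z = b then X (butlast z) else 0) else 0)"
  proof
    fix i assume i: "i \<in> {..length z}"
    show "X (take i z) * basis [b] (drop i z) =
     (if i = length z - 1 then (if z \<noteq> [] \<and> last z = b then X (butlast z) else 0) else 0)"
    proof (cases "z = []")
      case True then show ?thesis using i by (simp add: basis_def)
    next
      case False
      have "drop i z = [b] \<longleftrightarrow> i = length z - 1 \<and> last z = b"
      proof
        assume d: "drop i z = [b]"
        then have "length (drop i z) = 1" by simp
        then have "i = length z - 1" by simp
        moreover have "last z = b" using d False
          by (metis append_take_drop_id last_appendR last_snoc append_Nil not_Cons_self2)
        ultimately show "i = length z - 1 \<and> last z = b" by simp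
      next
        assume "i = length z - 1 \<and> last z = b"
        moreover obtain zz x where "z = zz@[x]" using False by (metis rev_exhaust)
        ultimately show "drop i z = [b]" by simp
      qed
      moreover have "i = length z - 1 \<Longrightarrow> take i z = butlast z" by (simp add: butlast_conv_take)
      ultimately show ?thesis using False by (auto simp: basis_def)
    qed
  qed
  then have "tmult X (basis [b]) z = (\<Sum>i\<le>length z. (if i = length z - 1 then (if z \<noteq> [] \<and> last z = b then X (butlast z) else 0) else 0))"
    unfolding tmult_def by (intro sum.cong refl) (use H in blast)
  also have "\<dots> = (if z \<noteq> [] \<and> last z = b then X (butlast z) else 0)"
    by (simp add: sum.delta)
  finally show ?thesis .
qed

lemma tmult_basis_left: "tmult (basis [b]) X z = (if z \<noteq> [] \<and> hd z = b then X (tl z) else 0)"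
proof -
  have H: "\<forall>i\<in>{..length z}. basis [b] (take i z) * X (drop i z) =
     (if i = 1 then (if z \<noteq> [] \<and> hd z = b then X (tl z) else 0) else 0)"
  proof
    fix i assume i: "i \<in> {..length z}"
    show "basis [b] (take i z) * X (drop i z) =
     (if i = 1 then (if z \<noteq> [] \<and> hd z = b then X (tl z) else 0) else 0)"
    proof (cases z)
      case Nil then show ?thesis using i by (simp add: basis_def)
    next
      case (Cons c z')
      have "take i z = [b] \<longleftrightarrow> i = 1 \<and> c = b"
        using Cons i by (cases i) auto
      then show ?thesis using Cons by (auto simp: basis_def)
    qed
  qed
  then have "tmult (basis [b]) X z = (\<Sum>i\<le>length z. (if i = 1 then (if z \<noteq> [] \<and> hd z = b then X (tl z) else 0) else 0))"
    unfolding tmult_def by (intro sum.cong refl) (use H in blast)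
  also have "\<dots> = (if z \<noteq> [] \<and> hd z = b then X (tl z) else 0)"
    by (cases z) (auto simp: sum.delta Suc_le_eq)
  finally show ?thesis .
qed

lemma sum_map_cons: "(\<Sum>w\<leftarrow>map ((#) c) L. f w) = (\<Sum>w\<leftarrow>L. f (c#w))"
  by (simp add: o_def)

lemma prim_aux1: "prim X \<Longrightarrow> q \<noteq> [] \<Longrightarrow> (\<Sum>w\<leftarrow>shf p q. X w) = (if p = [] then X q else 0)"
  unfolding prim_def by auto

lemma prim_aux2: "prim X \<Longrightarrow> p \<noteq> [] \<Longrightarrow> (\<Sum>w\<leftarrow>shf p q. X w) = (if q = [] then X p else 0)"
  unfolding prim_def by auto

lemma prim_bracket:
  assumes X: "prim X" shows "prim (bracket X (basis [b]))"
  unfolding prim_def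
proof (intro allI impI)
  fix p q :: "nat list" assume p: "p \<noteq> []" and q: "q \<noteq> []"
  define V where "V = (if p = [b] then X q else 0) + (if q = [b] then X p else 0)"
  have R: "(\<Sum>w\<leftarrow>shf p q. tmult X (basis [b]) w) = V"
  proof -
    obtain p' a where pa: "p = p'@[a]" using p by (metis rev_exhaust)
    obtain q' c where qc: "q = q'@[c]" using q by (metis rev_exhaust)
    have "(\<Sum>w\<leftarrow>shf p q. tmult X (basis [b]) w) = (\<Sum>w\<leftarrow>shf p q. (if w \<noteq> [] \<and> last w = b then X (butlast w) else 0))"
      by (simp add: tmult_basis_right)
    also have "\<dots> = (\<Sum>w\<leftarrow>shf p' q. (if a = b then X w else 0)) + (\<Sum>w\<leftarrow>shf p q'. (if c = b then X w else 0))"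
      unfolding pa qc by (subst sum_shf_snoc) (simp add: butlast_snoc cong: if_cong)
    also have "\<dots> = (if a = b then (\<Sum>w\<leftarrow>shf p' q. X w) else 0) + (if c = b then (\<Sum>w\<leftarrow>shf p q'. X w) else 0)"
      by (simp add: if_distrib)
    also have "\<dots> = V"
      unfolding V_def using prim_aux1[OF X q, of p'] prim_aux2[OF X p, of q'] pa qc by auto
    finally show ?thesis .
  qed
  have L: "(\<Sum>w\<leftarrow>shf p q. tmult (basis [b]) X w) = V"
  proof -
    obtain p' a where pa: "p = a#p'" using p by (metis list.exhaust)
    obtain q' c where qc: "q = c#q'" using q by (metis list.exhaust)
    have "(\<Sum>w\<leftarrow>shf p q. tmult (basis [b]) X w) = (\<Sum>w\<leftarrow>shf p q. (if w \<noteq> [] \<and> hd w = b then X (tl w) else 0))"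
      by (simp add: tmult_basis_left)
    also have "\<dots> = (\<Sum>w\<leftarrow>shf p' q. (if a = b then X w else 0)) + (\<Sum>w\<leftarrow>shf p q'. (if c = b then X w else 0))"
      unfolding pa qc by (simp add: o_def cong: if_cong)
    also have "\<dots> = (if a = b then (\<Sum>w\<leftarrow>shf p' q. X w) else 0) + (if c = b then (\<Sum>w\<leftarrow>shf p q'. X w) else 0)"
      by (simp add: if_distrib)
    also have "\<dots> = V"
      unfolding V_def using prim_aux1[OF X q, of p'] prim_aux2[OF X p, of q'] pa qc by auto
    finally show ?thesis .
  qed
  show "(\<Sum>w\<leftarrow>shf p q. bracket X (basis [b]) w) = 0"
    unfolding bracket_def using R L by (simp add: sum_list_subtractf)
qed

lemma prim_basis: "prim (basis [a])"
  unfolding prim_def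
proof (intro allI impI)
  fix p q :: "nat list" assume "p \<noteq> []" "q \<noteq> []"
  have "\<forall>w\<in>set (shf p q). basis [a] w = 0"
  proof
    fix w assume "w \<in> set (shf p q)"
    then have "length w = length p + length q" using shf_set by blast
    then have "w \<noteq> [a]" using \<open>p \<noteq> []\<close> \<open>q \<noteq> []\<close> by (cases p; cases q) auto
    then show "basis [a] w = 0" by (simp add: basis_def)
  qed
  then have "map (basis [a]) (shf p q) = map (\<lambda>_. 0) (shf p q)"
    by (simp add: map_eq_conv)
  then show "(\<Sum>w\<leftarrow>shf p q. basis [a] w) = 0"
    by (metis sum_list_0)
qed

lemma prim_foldl: "prim X \<Longrightarrow> prim (foldl (\<lambda>acc b. bracket acc (basis [b])) X as)"
  by (induction as arbitrary: X) (auto intro: prim_bracket)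

lemma prim_lbracket: "prim (lbracket a)"
proof (cases a)
  case Nil then show ?thesis by (simp add: prim_def)
next
  case (Cons a as) then show ?thesis by (simp add: prim_foldl prim_basis)
qed

lemma prim_move: "prim X \<Longrightarrow> X (u @ j # v) = (-1)^length u * (\<Sum>w\<leftarrow>shf (rev u) v. X (j#w))"
proof (induction u arbitrary: j v rule: rev_induct)
  case Nil then show ?case by simp
next
  case (snoc c u')
  have IH: "X (u' @ c # j # v) = (-1)^length u' * (\<Sum>w\<leftarrow>shf (rev u') (j#v). X (c#w))"
    using snoc by simp
  have "(\<Sum>w\<leftarrow>shf (c # rev u') (j#v). X w) = 0"
    using snoc.prems unfolding prim_def by blast
  then have "(\<Sum>w\<leftarrow>shf (rev u') (j#v). X (c#w)) = - (\<Sum>w\<leftarrow>shf (c # rev u') v. X (j#w))"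
    by (simp add: o_def)
  then show ?case using IH by simp
qed




fun dsh :: "'a list \<Rightarrow> ('a list \<times> 'a list) list" where
  "dsh [] = [([],[])]"
| "dsh (c#w) = map (\<lambda>(a,b). (c#a,b)) (dsh w) @ map (\<lambda>(a,b). (a,c#b)) (dsh w)"

lemma dsh_set: "p \<in> set (dsh w) \<Longrightarrow> length (fst p) + length (snd p) = length w \<and> set (fst p) \<union> set (snd p) \<subseteq> set w"
  by (induction w arbitrary: p) force+

lemma dsh_snoc: "mset (dsh (w@[c])) = image_mset (\<lambda>(a,b). (a@[c],b)) (mset (dsh w)) + image_mset (\<lambda>(a,b). (a,b@[c])) (mset (dsh w))"
  by (induction w) (auto simp: multiset.map_comp o_def case_prod_beta add_ac)

lemma count_map_cons: "count (image_mset ((#) x) L) (c#w) = (if x = c then count L w else 0)"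
  by (induction L) auto

lemma count_map_cons1: "count (image_mset (\<lambda>(a,b). (x#a,b)) D) (a0,b0) =
   (case a0 of [] \<Rightarrow> 0 | y#a' \<Rightarrow> if x = y then count D (a',b0) else 0)"
  by (induction D) (auto split: list.split)

lemma count_map_cons2: "count (image_mset (\<lambda>(a,b). (a,x#b)) D) (a0,b0) =
   (case b0 of [] \<Rightarrow> 0 | y#b' \<Rightarrow> if x = y then count D (a0,b') else 0)"
  by (induction D) (auto split: list.split)

lemma shf_dsh_count: "count (mset (shf a b)) w = count (mset (dsh w)) (a,b)"
proof (induction w arbitrary: a b)
  case Nil
  show ?case
  proof (cases "a = [] \<and> b = []")
    case True then show ?thesis by simp
  next
    case False
    then have "[] \<notin> set (shf a b)" using shf_set by fastforce
    then show ?thesis using False by (auto simp: count_eq_zero_iff)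
  qed
next
  case (Cons c w)
  show ?case
  proof (cases a)
    case Nil
    have h: "count (mset (dsh w)) ([], b') = (if b' = w then 1 else 0)" for b'
    proof -
      have "count (mset (dsh w)) ([], b') = count (mset (shf [] b')) w" by (rule Cons.IH[symmetric])
      also have "\<dots> = (if b' = w then 1 else 0)" by simp
      finally show ?thesis .
    qed
    then show ?thesis using Nil
      by (cases b) (auto simp: count_map_cons1 count_map_cons2)
  next
    case (Cons x a')
    note a = this
    show ?thesis
    proof (cases b)
      case Nil
      have h: "count (mset (dsh w)) (a', []) = (if a' = w then 1 else 0)" for a'
      proof -
        have "count (mset (dsh w)) (a', []) = count (mset (shf a' [])) w" by (rule Cons.IH[symmetric])
        also have "\<dots> = (if a' = w then 1 else 0)" by simp
        finally show ?thesis .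
      qed
      then show ?thesis using Nil a
        by (auto simp: count_map_cons1 count_map_cons2)
    next
      case (Cons y b')
      then show ?thesis using Cons.IH a
        by (simp add: count_map_cons count_map_cons1 count_map_cons2)
    qed
  qed
qed

lemma sum_list_basis: "(\<Sum>u\<leftarrow>L. basis w u) = int (count (mset L) w)"
  by (induction L) (auto simp: basis_def)

lemma sum_mset_apply: "(sum_mset M :: 'a \<Rightarrow> int) z = sum_mset (image_mset (\<lambda>f. f z) M)"
  by (induction M) auto

lemma sum_mset_delta: "sum_mset (image_mset (\<lambda>p. if p = p0 then 1 else 0) M) = (int (count M p0))"
  by (induction M) auto

lemma zspan_add: assumes "a \<in> zspan S" "b \<in> zspan S" shows "a + b \<in> zspan S"
  using assms(2)
proof (induction b rule: zspan.induct)
  case zero then show ?case using assms(1) by (metis add.right_neutral)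
next
  case (add y x) then show ?case by (metis add.assoc zspan.add)
next
  case (diff y x) then show ?case by (metis add_diff_eq zspan.diff)
qed

lemma zspan_uminus: "a \<in> zspan S \<Longrightarrow> - a \<in> zspan S"
proof (induction a rule: zspan.induct)
  case zero then show ?case by (metis minus_zero zspan.zero)
next
  case (add y x) then show ?case by (metis minus_add_distrib diff_conv_add_uminus zspan.diff add.commute)
next
  case (diff y x)
  have "- (y - x) = -y + x" by simp
  then show ?case using diff by (metis zspan.add)
qed

lemma zspan_diff: "a \<in> zspan S \<Longrightarrow> b \<in> zspan S \<Longrightarrow> a - b \<in> zspan S"
  using zspan_add zspan_uminus by (metis diff_conv_add_uminus)

lemma zspan_base: "x \<in> S \<Longrightarrow> x \<in> zspan S"
  using zspan.add[OF zspan.zero] by simp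

lemma zspan_sum_mset: "(\<And>p. p \<in># M \<Longrightarrow> g p \<in> zspan S) \<Longrightarrow> sum_mset (image_mset g M) \<in> zspan S"
  by (induction M) (auto intro: zspan_add zspan.zero)

lemma zspan_sign: "f \<in> zspan S \<Longrightarrow> (\<lambda>z. (-1)^m * f z) \<in> zspan S"
proof (cases "even m")
  case True
  assume "f \<in> zspan S"
  moreover have "(\<lambda>z. (-1)^m * f z) = f" using True by (simp add: fun_eq_iff)
  ultimately show ?thesis by simp
next
  case False
  assume "f \<in> zspan S"
  moreover have "(\<lambda>z. (-1)^m * f z) = - f" using False by (simp add: fun_eq_iff)
  ultimately show ?thesis using zspan_uminus by simp
qed

lemma zspan_linear:
  assumes "a \<in> zspan S"
    and "L 0 = 0" and "\<And>x y. L (x + y) = L x + L y" and "\<And>x y. L (x - y) = L x - L y"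
    and "\<And>s. s \<in> S \<Longrightarrow> L s \<in> zspan S'"
  shows "L a \<in> zspan S'"
  using assms(1)
proof (induction a rule: zspan.induct)
  case zero then show ?case using assms(2) zspan.zero by metis
next
  case (add y x) then show ?case using assms(3,5) zspan_add by metis
next
  case (diff y x) then show ?case using assms(4,5) zspan_diff by metis
qed

lemma sum_mset_combine:
  fixes f1 f2 h1 h2 :: "'a \<Rightarrow> 'b::ab_group_add"
  shows "sum_mset (image_mset f1 M) + sum_mset (image_mset f2 M) - (sum_mset (image_mset h1 M) + sum_mset (image_mset h2 M))
    = sum_mset (image_mset (\<lambda>p. (f1 p - h1 p) + (f2 p - h2 p)) M)"
  by (induction M) (auto simp: algebra_simps)




lemma words_finite: "finite (words n m)"
proof -
  have "words n m \<subseteq> {xs. set xs \<subseteq> {..<n} \<and> length xs = m}" by (auto simp: words_def)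
  moreover have "finite {xs. set xs \<subseteq> {..<n} \<and> length xs = m}"
    by (rule finite_lists_length_eq) simp
  ultimately show ?thesis by (rule finite_subset)
qed

lemma pos_iff:
  assumes w: "length w = Suc k" and l: "1 \<le> l" "l \<le> k + 1" and z: "length z = k"
  shows "(w ! (l - 1) = i \<and> take (l - 1) w @ drop l w = z) \<longleftrightarrow> w = take (l - 1) z @ i # drop (l - 1) z"
proof
  assume h: "w ! (l - 1) = i \<and> take (l - 1) w @ drop l w = z"
  have lw: "l - 1 < length w" using w l by simp
  have w1: "w = take (l - 1) w @ w ! (l - 1) # drop (Suc (l - 1)) w" using id_take_nth_drop[OF lw] .
  have sl: "Suc (l - 1) = l" using l by simp
  have zt: "z = take (l - 1) w @ drop l w" using h by simp
  have t1: "take (l - 1) z = take (l - 1) w" unfolding zt using lw by simp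
  have t2: "drop (l - 1) z = drop l w" unfolding zt using lw by simp
  have "w = take (l - 1) w @ i # drop l w" using w1 h unfolding sl by simp
  then show "w = take (l - 1) z @ i # drop (l - 1) z" unfolding t1 t2 .
next
  assume h: "w = take (l - 1) z @ i # drop (l - 1) z"
  have "length (take (l - 1) z) = l - 1" using z l by simp
  then show "w ! (l - 1) = i \<and> take (l - 1) w @ drop l w = z"
    using h l by (simp add: nth_append)
qed

lemma Phi_dtens:
  assumes l: "1 \<le> l" "l \<le> k + 1"
  shows "Phi n k l (dtens i X) z = (if z \<in> words n k \<and> i < n then X (take (l - 1) z @ i # drop (l - 1) z) else 0)"
proof -
  define w0 where "w0 = take (l - 1) z @ i # drop (l - 1) z"
  have inner: "(\<Sum>j<n. (if w ! (l - 1) = j \<and> take (l - 1) w @ drop l w = z then dtens i X (j, w) else 0))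
      = (if i < n \<and> w ! (l - 1) = i \<and> take (l - 1) w @ drop l w = z then X w else 0)" for w
  proof -
    have "(\<Sum>j<n. (if w ! (l - 1) = j \<and> take (l - 1) w @ drop l w = z then dtens i X (j, w) else 0))
       = (\<Sum>j<n. (if j = i then (if w ! (l - 1) = i \<and> take (l - 1) w @ drop l w = z then X w else 0) else 0))"
      by (intro sum.cong refl) (auto simp: dtens_def)
    also have "\<dots> = (if i < n \<and> w ! (l - 1) = i \<and> take (l - 1) w @ drop l w = z then X w else 0)"
      by (simp add: sum.delta)
    finally show ?thesis .
  qed
  have key: "(i < n \<and> w ! (l - 1) = i \<and> take (l - 1) w @ drop l w = z) \<longleftrightarrow> (z \<in> words n k \<and> i < n \<and> w = w0)"
    if w: "w \<in> words n (k+1)" for w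
  proof
    assume h: "i < n \<and> w ! (l - 1) = i \<and> take (l - 1) w @ drop l w = z"
    have lw: "length w = Suc k" using w by (simp add: words_def)
    have sw: "set w \<subseteq> {..<n}" using w by (simp add: words_def)
    have zt: "z = take (l - 1) w @ drop l w" using h by simp
    have lz: "length z = k" unfolding zt using lw l by simp
    have "set z \<subseteq> set w" unfolding zt using set_take_subset set_drop_subset by (metis Un_least set_append)
    then have zw: "z \<in> words n k" using lz sw by (simp add: words_def)
    have "w = w0" using pos_iff[OF lw l lz, of i] h unfolding w0_def by blast
    then show "z \<in> words n k \<and> i < n \<and> w = w0" using zw h by blast
  next
    assume h: "z \<in> words n k \<and> i < n \<and> w = w0"
    have lw: "length w = Suc k" using w by (simp add: words_def)
    have lz: "length z = k" using h by (simp add: words_def)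
    show "i < n \<and> w ! (l - 1) = i \<and> take (l - 1) w @ drop l w = z"
      using pos_iff[OF lw l lz, of i] h unfolding w0_def by blast
  qed
  have "Phi n k l (dtens i X) z = (\<Sum>w\<in>words n (k+1). (if i < n \<and> w ! (l - 1) = i \<and> take (l - 1) w @ drop l w = z then X w else 0))"
    unfolding Phi_def by (subst sum.swap) (simp only: inner)
  also have "\<dots> = (\<Sum>w\<in>words n (k+1). (if w = w0 then (if z \<in> words n k \<and> i < n then X w else 0) else 0))"
  proof (intro sum.cong refl)
    fix w assume w: "w \<in> words n (k+1)"
    show "(if i < n \<and> w ! (l - 1) = i \<and> take (l - 1) w @ drop l w = z then X w else 0) =
      (if w = w0 then (if z \<in> words n k \<and> i < n then X w else 0) else 0)"
      unfolding key[OF w] by simp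
  qed
  also have "\<dots> = (if w0 \<in> words n (k+1) then (if z \<in> words n k \<and> i < n then X w0 else 0) else 0)"
    using words_finite by (simp add: sum.delta')
  also have "\<dots> = (if z \<in> words n k \<and> i < n then X w0 else 0)"
  proof -
    have "w0 \<in> words n (k+1)" if "z \<in> words n k" "i < n"
    proof -
      have "length w0 = Suc k" using that l unfolding w0_def words_def by simp
      moreover have "set w0 \<subseteq> {..<n}"
      proof -
        have "set w0 \<subseteq> set z \<union> {i}" unfolding w0_def
          using set_take_subset[of "l-1" z] set_drop_subset[of "l-1" z] by auto
        moreover have "set z \<subseteq> {..<n}" using that by (simp add: words_def)
        ultimately show ?thesis using that(2) by blast
      qed
      ultimately show ?thesis by (simp add: words_def)
    qed
    then show ?thesis by auto
  qed
  finally show ?thesis unfolding w0_def .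
qed

lemma if_add0: "(if C then (a::int) + b else 0) = (if C then a else 0) + (if C then b else 0)" by simp
lemma if_diff0: "(if C then (a::int) - b else 0) = (if C then a else 0) - (if C then b else 0)" by simp

lemma Phi_add: "Phi n k l (x + y) = Phi n k l x + Phi n k l y"
  unfolding Phi_def plus_fun_def by (simp only: if_add0 sum.distrib)

lemma Phi_diff: "Phi n k l (x - y) = Phi n k l x - Phi n k l y"
  unfolding Phi_def fun_diff_def by (simp only: if_diff0 sum_subtractf)

lemma Phi_zero: "Phi n k l 0 = 0"
  unfolding Phi_def zero_fun_def by simp

definition T :: "nat \<Rightarrow> nat \<Rightarrow> nat \<Rightarrow> (nat list \<Rightarrow> int) \<Rightarrow> (nat list \<Rightarrow> int)" where
  "T n k l f z = (if z \<in> words n k then (-1)^(l-1) * (\<Sum>w\<leftarrow>shf (rev (take (l-1) z)) (drop (l-1) z). f w) else 0)"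

lemma sl_plus: "(\<Sum>w\<leftarrow>L. (f + g) w) = (\<Sum>w\<leftarrow>L. f w) + (\<Sum>w\<leftarrow>L. (g :: nat list \<Rightarrow> int) w)"
  by (induction L) auto
lemma sl_minus: "(\<Sum>w\<leftarrow>L. (f - g) w) = (\<Sum>w\<leftarrow>L. f w) - (\<Sum>w\<leftarrow>L. (g :: nat list \<Rightarrow> int) w)"
  by (induction L) auto
lemma sl_zero: "(\<Sum>w\<leftarrow>L. (0 :: nat list \<Rightarrow> int) w) = 0"
  by (induction L) auto

lemma T_add: "T n k l (f + g) = T n k l f + T n k l g"
proof (rule ext)
  fix z show "T n k l (f + g) z = (T n k l f + T n k l g) z"
    unfolding plus_fun_def T_def by (simp add: sum_list_addf algebra_simps)
qed

lemma T_diff: "T n k l (f - g) = T n k l f - T n k l g"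
proof (rule ext)
  fix z show "T n k l (f - g) z = (T n k l f - T n k l g) z"
    unfolding fun_diff_def T_def by (simp add: sum_list_subtractf algebra_simps)
qed

lemma T_zero: "T n k l 0 = 0"
proof (rule ext)
  fix z show "T n k l 0 z = (0 :: nat list \<Rightarrow> int) z"
    unfolding zero_fun_def T_def by simp
qed




lemma Phi_T_gen:
  assumes l: "1 \<le> l" "l \<le> k + 1" and i: "i < n"
  shows "Phi n k l (dtens i (lbracket a)) = T n k l (Phi n k 1 (dtens i (lbracket a)))"
proof (rule ext)
  fix z :: "nat list"
  define X where "X = lbracket a"
  define u where "u = take (l - 1) z"
  define v where "v = drop (l - 1) z"
  have l1: "1 \<le> (1::nat)" "1 \<le> k + 1" by auto
  show "Phi n k l (dtens i (lbracket a)) z = T n k l (Phi n k 1 (dtens i (lbracket a))) z"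
  proof (cases "z \<in> words n k")
    case False
    have "Phi n k l (dtens i (lbracket a)) z = 0" using Phi_dtens[OF l, of n i "lbracket a" z] False by simp
    moreover have "T n k l (Phi n k 1 (dtens i (lbracket a))) z = 0" using False unfolding T_def by simp
    ultimately show ?thesis by simp
  next
    case True
    have lu: "length u = l - 1" using True l unfolding u_def words_def by simp
    have eq: "Phi n k 1 (dtens i X) w = X (i # w)" if "w \<in> set (shf (rev u) v)" for w
    proof -
      have "length w = length u + length v \<and> set w \<subseteq> set u \<union> set v" using shf_set that by fastforce
      moreover have "length u + length v = k" "set u \<union> set v \<subseteq> set z"
        using True l unfolding u_def v_def words_def by (auto dest: in_set_takeD in_set_dropD)
      ultimately have "w \<in> words n k" using True unfolding words_def by auto
      then have "Phi n k 1 (dtens i X) w = X (take (1 - 1) w @ i # drop (1 - 1) w)"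
        using Phi_dtens[OF l1, of n i X w] i by simp
      then show ?thesis by simp
    qed
    have s1: "(\<Sum>w\<leftarrow>shf (rev u) v. Phi n k 1 (dtens i X) w) = (\<Sum>w\<leftarrow>shf (rev u) v. X (i # w))"
      using eq by (intro arg_cong[where f=sum_list] map_cong) auto
    have s2: "X (u @ i # v) = (-1)^(l-1) * (\<Sum>w\<leftarrow>shf (rev u) v. X (i#w))"
      using prim_move[OF prim_lbracket[of a], of u i v] lu unfolding X_def by simp
    have s3: "Phi n k l (dtens i X) z = X (u @ i # v)"
      using Phi_dtens[OF l, of n i X z] True i unfolding u_def v_def by simp
    have s4: "T n k l (Phi n k 1 (dtens i X)) z = (-1)^(l-1) * (\<Sum>w\<leftarrow>shf (rev u) v. Phi n k 1 (dtens i X) w)"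
      using True unfolding T_def u_def v_def by simp
    show ?thesis using s1 s2 s3 s4 unfolding X_def by simp
  qed
qed


lemma Phi_T:
  assumes l: "1 \<le> l" "l \<le> k + 1" and x: "x \<in> dualLie n k"
  shows "Phi n k l x = T n k l (Phi n k 1 x)"
  using x unfolding dualLie_def
proof (induction x rule: zspan.induct)
  case zero then show ?case by (simp only: Phi_zero T_zero)
next
  case (add y x)
  then obtain i a where "x = dtens i (lbracket a)" "i < n" by blast
  then have "Phi n k l x = T n k l (Phi n k 1 x)" using Phi_T_gen[OF l] by simp
  then show ?case using add.IH by (simp only: Phi_add T_add)
next
  case (diff y x)
  then obtain i a where "x = dtens i (lbracket a)" "i < n" by blast
  then have "Phi n k l x = T n k l (Phi n k 1 x)" using Phi_T_gen[OF l] by simp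
  then show ?case using diff.IH by (simp only: Phi_diff T_diff)
qed

definition F :: "nat \<Rightarrow> nat list \<times> nat list \<Rightarrow> (nat list \<Rightarrow> int)" where
  "F l p = (if length (fst p) = l - 1 then basis (rev (fst p) @ snd p) else 0)"

definition D :: "nat \<Rightarrow> nat list \<Rightarrow> (nat list \<Rightarrow> int)" where
  "D l w = sum_mset (image_mset (F l) (mset (dsh w)))"

lemma T_basis:
  assumes w: "w \<in> words n k" and l: "1 \<le> l" "l \<le> k + 1"
  shows "T n k l (basis w) z = (-1)^(l-1) * D l w z"
proof -
  have Dz: "D l w z = sum_mset (image_mset (\<lambda>p. F l p z) (mset (dsh w)))"
    unfolding D_def sum_mset_apply by (simp add: multiset.map_comp o_def)
  show ?thesis
  proof (cases "z \<in> words n k")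
    case True
    define P0 where "P0 = (rev (take (l - 1) z), drop (l - 1) z)"
    have lz: "l - 1 \<le> length z" using True l by (simp add: words_def)
    have "F l p z = (if p = P0 then 1 else 0)" for p
    proof -
      obtain a b where p: "p = (a,b)" by fastforce
      have "(length a = l - 1 \<and> rev a @ b = z) \<longleftrightarrow> (a,b) = P0"
      proof
        assume h: "length a = l - 1 \<and> rev a @ b = z"
        then show "(a,b) = P0" unfolding P0_def by auto
      next
        assume "(a,b) = P0"
        then show "length a = l - 1 \<and> rev a @ b = z" using lz unfolding P0_def by auto
      qed
      then show ?thesis unfolding F_def p basis_def by auto
    qed
    then have "D l w z = int (count (mset (dsh w)) P0)"
      unfolding Dz by (simp add: sum_mset_delta)
    also have "\<dots> = (\<Sum>u\<leftarrow>shf (rev (take (l - 1) z)) (drop (l - 1) z). basis w u)"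
      unfolding sum_list_basis P0_def shf_dsh_count ..
    finally show ?thesis using True unfolding T_def by simp
  next
    case False
    have "F l p z = 0" if "p \<in># mset (dsh w)" for p
    proof -
      have "length (fst p) + length (snd p) = length w \<and> set (fst p) \<union> set (snd p) \<subseteq> set w"
        using dsh_set that by simp
      then have "rev (fst p) @ snd p \<in> words n k" using w unfolding words_def by auto
      then show ?thesis using False unfolding F_def basis_def by auto
    qed
    then have "D l w z = sum_mset (image_mset (\<lambda>p. 0) (mset (dsh w)))"
      unfolding Dz by (intro arg_cong[where f = sum_mset] image_mset_cong) auto
    then show ?thesis using False unfolding T_def by simp
  qed
qed

lemma D_rot:
  assumes w: "c # w' \<in> words n k" and l: "1 \<le> l" "l \<le> k + 1"
  shows "D l (c # w') - D l (w' @ [c]) \<in> cycRel n k l"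
proof -
  define M where "M = mset (dsh w')"
  have D1: "D l (c # w') = sum_mset (image_mset (\<lambda>(a,b). F l (c#a, b)) M) + sum_mset (image_mset (\<lambda>(a,b). F l (a, c#b)) M)"
  proof -
    have m: "mset (dsh (c # w')) = image_mset (\<lambda>(a,b). (c#a,b)) M + image_mset (\<lambda>(a,b). (a,c#b)) M"
      unfolding M_def by (simp only: dsh.simps mset_append mset_map)
    have e1: "F l \<circ> (\<lambda>(a,b). (c#a,b)) = (\<lambda>(a,b). F l (c#a, b))" by (auto simp: fun_eq_iff)
    have e2: "F l \<circ> (\<lambda>(a,b). (a,c#b)) = (\<lambda>(a,b). F l (a, c#b))" by (auto simp: fun_eq_iff)
    show ?thesis unfolding D_def m image_mset_union sum_mset.union multiset.map_comp e1 e2 ..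
  qed
  have D2: "D l (w' @ [c]) = sum_mset (image_mset (\<lambda>(a,b). F l (a@[c], b)) M) + sum_mset (image_mset (\<lambda>(a,b). F l (a, b@[c])) M)"
  proof -
    have e1: "F l \<circ> (\<lambda>(a,b). (a@[c],b)) = (\<lambda>(a,b). F l (a@[c], b))" by (auto simp: fun_eq_iff)
    have e2: "F l \<circ> (\<lambda>(a,b). (a,b@[c])) = (\<lambda>(a,b). F l (a, b@[c]))" by (auto simp: fun_eq_iff)
    show ?thesis unfolding D_def dsh_snoc M_def[symmetric] image_mset_union sum_mset.union multiset.map_comp e1 e2 ..
  qed
  have "D l (c # w') - D l (w' @ [c]) = sum_mset (image_mset (\<lambda>p. ((\<lambda>(a,b). F l (c#a, b)) p - (\<lambda>(a,b). F l (a@[c], b)) p)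
       + ((\<lambda>(a,b). F l (a, c#b)) p - (\<lambda>(a,b). F l (a, b@[c])) p)) M)"
    unfolding D1 D2 by (rule sum_mset_combine)
  also have "\<dots> \<in> cycRel n k l" unfolding cycRel_def
  proof (rule zspan_sum_mset)
    fix p assume pM: "p \<in># M"
    obtain a b where p: "p = (a,b)" by fastforce
    have ab: "length a + length b = length w'" "set a \<subseteq> set w'" "set b \<subseteq> set w'"
      using dsh_set[of p w'] pM p unfolding M_def by auto
    have wk: "Suc (length w') = k" "set w' \<subseteq> {..<n}" "c < n" using w unfolding words_def by auto
    let ?S = "{basis (u @ v) - basis (rotate1 u @ v) | u v. u \<in> words n (l - 1) \<and> v \<in> words n (k + 1 - l)}
    \<union> {basis (u @ v) - basis (u @ rotate1 v) | u v. u \<in> words n (l - 1) \<and> v \<in> words n (k + 1 - l)}"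
    have A: "F l (c#a, b) - F l (a@[c], b) \<in> zspan ?S"
    proof (cases "Suc (length a) = l - 1")
      case True
      have u1: "c # rev a \<in> words n (l - 1)" using True ab wk unfolding words_def by auto
      have v1: "b \<in> words n (k + 1 - l)" using True ab wk unfolding words_def by auto
      have mem: "basis ((c # rev a) @ b) - basis (rotate1 (c # rev a) @ b) \<in> ?S"
        using u1 v1 by blast
      have "F l (c#a, b) - F l (a@[c], b) = - (basis ((c # rev a) @ b) - basis (rotate1 (c # rev a) @ b))"
        using True unfolding F_def by simp
      then show ?thesis using zspan_uminus[OF zspan_base[OF mem]] by simp
    next
      case False
      then have "F l (c#a, b) - F l (a@[c], b) = 0" unfolding F_def by simp
      then show ?thesis using zspan.zero by metis
    qed
    have B: "F l (a, c#b) - F l (a, b@[c]) \<in> zspan ?S"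
    proof (cases "length a = l - 1")
      case True
      have u1: "rev a \<in> words n (l - 1)" using True ab wk unfolding words_def by auto
      have v1: "c # b \<in> words n (k + 1 - l)" using True ab wk l unfolding words_def by auto
      have mem: "basis (rev a @ (c # b)) - basis (rev a @ rotate1 (c # b)) \<in> ?S"
        using u1 v1 by blast
      have "F l (a, c#b) - F l (a, b@[c]) = basis (rev a @ (c # b)) - basis (rev a @ rotate1 (c # b))"
        using True unfolding F_def by simp
      then show ?thesis using zspan_base[OF mem] by simp
    next
      case False
      then have "F l (a, c#b) - F l (a, b@[c]) = 0" unfolding F_def by simp
      then show ?thesis using zspan.zero by metis
    qed
    show "((\<lambda>(a,b). F l (c#a, b)) p - (\<lambda>(a,b). F l (a@[c], b)) p)
       + ((\<lambda>(a,b). F l (a, c#b)) p - (\<lambda>(a,b). F l (a, b@[c])) p) \<in> zspan ?S"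
      using zspan_add[OF A B] p by simp
  qed
  finally show ?thesis .
qed

theorem mainTheorem7:
  fixes n k l :: nat
  assumes "2 \<le> k" and "k + 2 \<le> n" and "1 \<le> l" and "l \<le> k + 1"
  shows "kerTheta n k 1 \<subseteq> kerTheta n k l"
proof
  have l: "1 \<le> l" "l \<le> k + 1" using assms by auto
  fix x assume "x \<in> kerTheta n k 1"
  then have x: "x \<in> dualLie n k" and y: "Phi n k 1 x \<in> cycRel n k 1" unfolding kerTheta_def by auto
  let ?S' = "{basis (u @ v) - basis (rotate1 u @ v) | u v. u \<in> words n (l - 1) \<and> v \<in> words n (k + 1 - l)}
    \<union> {basis (u @ v) - basis (u @ rotate1 v) | u v. u \<in> words n (l - 1) \<and> v \<in> words n (k + 1 - l)}"
  let ?S = "{basis (u @ v) - basis (rotate1 u @ v) | u v. u \<in> words n (1 - 1) \<and> v \<in> words n (k + 1 - 1)}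
    \<union> {basis (u @ v) - basis (u @ rotate1 v) | u v. u \<in> words n (1 - 1) \<and> v \<in> words n (k + 1 - 1)}"
  have gen: "T n k l s \<in> zspan ?S'" if sS: "s \<in> ?S" for s
  proof -
    obtain u v where u: "u \<in> words n (1-1)" and v: "v \<in> words n (k+1-1)"
      and s: "s = basis (u@v) - basis (rotate1 u @ v) \<or> s = basis (u@v) - basis (u @ rotate1 v)"
    proof (rule UnE[OF sS])
      assume "s \<in> {basis (u @ v) - basis (rotate1 u @ v) | u v. u \<in> words n (1 - 1) \<and> v \<in> words n (k + 1 - 1)}"
      then obtain u v where "s = basis (u @ v) - basis (rotate1 u @ v)" "u \<in> words n (1 - 1)" "v \<in> words n (k + 1 - 1)"
        unfolding mem_Collect_eq by (elim exE conjE)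
      then show thesis using that by blast
    next
      assume "s \<in> {basis (u @ v) - basis (u @ rotate1 v) | u v. u \<in> words n (1 - 1) \<and> v \<in> words n (k + 1 - 1)}"
      then obtain u v where "s = basis (u @ v) - basis (u @ rotate1 v)" "u \<in> words n (1 - 1)" "v \<in> words n (k + 1 - 1)"
        unfolding mem_Collect_eq by (elim exE conjE)
      then show thesis using that by blast
    qed
    have u0: "u = []" using u by (simp add: words_def)
    have vk: "v \<in> words n k" using v by simp
    show ?thesis
    proof (cases "s = basis (u@v) - basis (rotate1 u @ v)")
      case True
      then have s0: "s = 0" unfolding u0 by (simp only: append_Nil rotate1.simps(1) diff_self)
      show ?thesis unfolding s0 T_zero by (rule zspan.zero)
    next
      case False
      then have s: "s = basis v - basis (rotate1 v)" using s unfolding u0 append_Nil by blast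
      show ?thesis
      proof (cases v)
        case Nil
        then have s0: "s = 0" using s by (simp only: rotate1.simps(1) diff_self)
        show ?thesis unfolding s0 T_zero by (rule zspan.zero)
      next
        case (Cons c w')
        have rv: "rotate1 v \<in> words n k" using vk unfolding words_def by simp
        have "T n k l s = (\<lambda>z. (-1)^(l-1) * (D l (c # w') - D l (w' @ [c])) z)"
        proof (rule ext)
          fix z
          have Ts: "T n k l s = T n k l (basis v) - T n k l (basis (rotate1 v))"
            unfolding s by (rule T_diff)
          have "T n k l s z = T n k l (basis v) z - T n k l (basis (rotate1 v)) z"
            unfolding Ts by (simp only: fun_diff_def)
          also have "\<dots> = (-1)^(l-1) * D l v z - (-1)^(l-1) * D l (rotate1 v) z"
            using T_basis[OF vk l] T_basis[OF rv l] by simp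
          also have "\<dots> = (-1)^(l-1) * (D l (c # w') - D l (w' @ [c])) z"
            unfolding Cons fun_diff_def by (simp add: right_diff_distrib)
          finally show "T n k l s z = (-1)^(l-1) * (D l (c # w') - D l (w' @ [c])) z" .
        qed
        moreover have "(\<lambda>z. (-1)^(l-1) * (D l (c # w') - D l (w' @ [c])) z) \<in> zspan ?S'"
          using D_rot[OF vk[unfolded Cons] l] unfolding cycRel_def by (rule zspan_sign)
        ultimately show ?thesis by (simp only:)
      qed
    qed
  qed
  have "T n k l (Phi n k 1 x) \<in> zspan ?S'"
  proof (rule zspan_linear[where L = "T n k l"])
    show "Phi n k 1 x \<in> zspan ?S" using y unfolding cycRel_def .
    show "T n k l 0 = 0" by (rule T_zero)
    show "T n k l (f + g) = T n k l f + T n k l g" for f g by (rule T_add)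
    show "T n k l (f - g) = T n k l f - T n k l g" for f g by (rule T_diff)
    show "T n k l s \<in> zspan ?S'" if "s \<in> ?S" for s using gen that .
  qed
  then have "Phi n k l x \<in> cycRel n k l" using Phi_T[OF l x] unfolding cycRel_def by simp
  then show "x \<in> kerTheta n k l" using x unfolding kerTheta_def by simp
qed

end
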